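(* Let $X$ be a $T_0$ space. Then $\mathcal{O}(\mathcal{GSI}_2(X))=\mathcal{O}_{SI_2}(X)$; that is, a subset $U\subseteq X$ is $SI_2$-open if and only if whenever a net $(x_i)_{i\in I}$ in $X$ $GSI_2$-converges to some $x\in U$, then $x_i\in U$ eventually.
   Context: For a $T_0$ space $X$, the specialization order is $x\le y$ iff $x\in \mathrm{cl}\{y\}$; all order notions refer to it. For $A\subseteq X$, $\uparrow A=\{x: a\le x \text{ for some } a\in A\}$, $\uparrow x=\uparrow\{x\}$; $A^{\uparrow}$ is the set of upper bounds of $A$, $A^{\downarrow}$ the set of lower bounds, and $A^\delta=(A^\uparrow)^\downarrow$. A nonempty $A\subseteq X$ is irreducible if whenever $A\subseteq F_1\cup F_2$ with $F_1,F_2$ closed, then $A\subseteq F_1$ or $A\subseteq F_2$; $\mathrm{Irr}(X)$ is the set of irreducible subsets. $X^{(<\omega)}$ is the set of nonempty finite subsets of $X$. $P_S(X)$ is the set $Q(X)$ of nonempty compact saturated (upper) subsets of $X$ with the upper Vietoris topology, whose basis is $\{\square U: U\text{ open}\}$, $\square U=\{Q\in Q(X): Q\subseteq U\}$. A net is eventually in $U$ if from some index on all its terms lie in $U$. A subset $U\subseteq X$ is $SI_2$-open if $U$ is open in $X$ and for every $F\in\mathrm{Irr}(X)$, $F^\delta\cap U\ne\emptyset$ implies $F\cap U\neq\emptyset$; these form the topology $\mathcal{O}_{SI_2}(X)$. A net $(x_i)_{i\in I}$ $GSI_2$-converges to $x$ if there exists $\mathcal F\subseteq X^{(<\omega)}$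 with $\{\uparrow F:F\in\mathcal F\}$ irreducible in $P_S(X)$ such that (i) for every open $U$, if $\uparrow F\subseteq U$ for some $F\in\mathcal F$ then $x_i\in U$ eventually, and (ii) $\bigcap_{F\in\mathcal F}\uparrow F\subseteq\uparrow x$. $\mathcal{O}(\mathcal{GSI}_2(X))$ denotes the set of all $U\subseteq X$ such that whenever a net $GSI_2$-converges to a point of $U$, it is eventually in $U$. *)

theory Defs
  imports "HOL-Analysis.Analysis"
begin

definition spec_le :: "'a topology \<Rightarrow> 'a \<Rightarrow> 'a \<Rightarrow> bool" where
  "spec_le X x y \<longleftrightarrow> x \<in> topspace X \<and> y \<in> topspace X \<and> x \<in> X closure_of {y}"

definition upset :: "'a topology \<Rightarrow> 'a set \<Rightarrow> 'a set" where
  "upset X A = {x \<in> topspace X. \<exists>a\<in>A. spec_le X a x}"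

definition upper_bounds :: "'a topology \<Rightarrow> 'a set \<Rightarrow> 'a set" where
  "upper_bounds X A = {y \<in> topspace X. \<forall>a\<in>A. spec_le X a y}"

definition lower_bounds :: "'a topology \<Rightarrow> 'a set \<Rightarrow> 'a set" where
  "lower_bounds X A = {y \<in> topspace X. \<forall>a\<in>A. spec_le X y a}"

definition delta_cut :: "'a topology \<Rightarrow> 'a set \<Rightarrow> 'a set" where
  "delta_cut X A = lower_bounds X (upper_bounds X A)"

definition irreducible_in :: "'a topology \<Rightarrow> 'a set \<Rightarrow> bool" where
  "irreducible_in X A \<longleftrightarrow> A \<noteq> {} \<and> A \<subseteq> topspace X \<and>
     (\<forall>F1 F2. closedin X F1 \<longrightarrow> closedin X F2 \<longrightarrow> A \<subseteq> F1 \<union> F2 \<longrightarrow> A \<subseteq> F1 \<or> A \<subseteq> F2)"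

definition Irr :: "'a topology \<Rightarrow> 'a set set" where
  "Irr X = {A. irreducible_in X A}"

definition fin_subsets :: "'a topology \<Rightarrow> 'a set set" where
  "fin_subsets X = {F. F \<subseteq> topspace X \<and> finite F \<and> F \<noteq> {}}"

definition QX :: "'a topology \<Rightarrow> 'a set set" where
  "QX X = {Q. Q \<noteq> {} \<and> compactin X Q \<and> upset X Q = Q}"

definition box :: "'a topology \<Rightarrow> 'a set \<Rightarrow> 'a set set" where
  "box X U = {Q \<in> QX X. Q \<subseteq> U}"

definition smyth_space :: "'a topology \<Rightarrow> 'a set topology" where
  "smyth_space X = topology_generated_by {box X U | U. openin X U}"

definition SI2_open :: "'a topology \<Rightarrow> 'a set \<Rightarrow> bool" where
  "SI2_open X U \<longleftrightarrow> openin X U \<and>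
     (\<forall>F\<in>Irr X. delta_cut X F \<inter> U \<noteq> {} \<longrightarrow> F \<inter> U \<noteq> {})"

text \<open>Nets are represented by their filters of tails (eventuality filters): a net
  (x_i) in X is eventually in U iff U belongs to its tail filter N; tail filters of
  nets in X are exactly the proper filters N with eventually (\<in> topspace X).\<close>
definition GSI2_converges :: "'a topology \<Rightarrow> 'a filter \<Rightarrow> 'a \<Rightarrow> bool" where
  "GSI2_converges X N x \<longleftrightarrow>
     (\<exists>\<F>. \<F> \<subseteq> fin_subsets X \<and>
        irreducible_in (smyth_space X) ((\<lambda>F. upset X F) ` \<F>) \<and>
        (\<forall>U. openin X U \<longrightarrow> (\<exists>F\<in>\<F>. upset X F \<subseteq> U) \<longrightarrow> eventually (\<lambda>y. y \<in> U) N) \<and>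
        (\<Inter>F\<in>\<F>. upset X F) \<subseteq> upset X {x})"

definition GSI2_open :: "'a topology \<Rightarrow> 'a set \<Rightarrow> bool" where
  "GSI2_open X U \<longleftrightarrow> U \<subseteq> topspace X \<and>
     (\<forall>N x. N \<noteq> bot \<longrightarrow> eventually (\<lambda>y. y \<in> topspace X) N \<longrightarrow>
        x \<in> U \<longrightarrow> GSI2_converges X N x \<longrightarrow> eventually (\<lambda>y. y \<in> U) N)"

end

theory Submission
  imports Defs
begin

lemma spec_refl: "a \<in> topspace X \<Longrightarrow> spec_le X a a"
  unfolding spec_le_def using closure_of_subset[of "{a}" X] by auto

lemma spec_trans: "spec_le X a b \<Longrightarrow> spec_le X b c \<Longrightarrow> spec_le X a c"
proof -
  assume ab: "spec_le X a b" and bc: "spec_le X b c"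
  have "{b} \<subseteq> X closure_of {c}" using bc unfolding spec_le_def by simp
  then have "X closure_of {b} \<subseteq> X closure_of {c}"
    by (simp add: closure_of_minimal)
  then show ?thesis using ab bc unfolding spec_le_def by blast
qed

lemma spec_open: "openin X V \<Longrightarrow> a \<in> V \<Longrightarrow> spec_le X a b \<Longrightarrow> b \<in> V"
proof (rule ccontr)
  assume V: "openin X V" and a: "a \<in> V" and s: "spec_le X a b" and b: "b \<notin> V"
  have "closedin X (topspace X - V)" using V by auto
  moreover have "{b} \<subseteq> topspace X - V" using s b unfolding spec_le_def by auto
  ultimately have "X closure_of {b} \<subseteq> topspace X - V" by (simp add: closure_of_minimal)
  then show False using s a unfolding spec_le_def by auto
qed

lemma upset_open: "openin X V \<Longrightarrow> F \<subseteq> V \<Longrightarrow> upset X F \<subseteq> V"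
proof
  fix x assume V: "openin X V" and F: "F \<subseteq> V" and x: "x \<in> upset X F"
  then obtain a where "a \<in> F" "spec_le X a x" unfolding upset_def by auto
  then show "x \<in> V" using spec_open[OF V] F by auto
qed

lemma self_upset: "F \<subseteq> topspace X \<Longrightarrow> F \<subseteq> upset X F"
proof
  fix x assume F: "F \<subseteq> topspace X" and x: "x \<in> F"
  then have "x \<in> topspace X" by blast
  then have "spec_le X x x" by (rule spec_refl)
  then show "x \<in> upset X F" using x F unfolding upset_def by auto
qed

lemma upset_single_QX: "a \<in> topspace X \<Longrightarrow> upset X {a} \<in> QX X"
proof -
  assume a: "a \<in> topspace X"
  have ne: "upset X {a} \<noteq> {}" using self_upset[of "{a}" X] a by auto
  have sub: "upset X {a} \<subseteq> topspace X" unfolding upset_def by auto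
  have comp: "compactin X (upset X {a})"
    unfolding compactin_def
  proof (intro conjI sub allI impI)
    fix \<U> assume h: "(\<forall>B\<in>\<U>. openin X B) \<and> upset X {a} \<subseteq> \<Union>\<U>"
    then obtain B where B: "B \<in> \<U>" "a \<in> B" using self_upset[of "{a}" X] a by blast
    then have "upset X {a} \<subseteq> B" using h upset_open[of X B "{a}"] by auto
    then show "\<exists>\<F>. finite \<F> \<and> \<F> \<subseteq> \<U> \<and> upset X {a} \<subseteq> \<Union>\<F>"
      using B by (intro exI[of _ "{B}"]) auto
  qed
  have "upset X (upset X {a}) = upset X {a}"
  proof
    show "upset X (upset X {a}) \<subseteq> upset X {a}"
    proof
      fix z assume "z \<in> upset X (upset X {a})"
      then obtain b where b: "b \<in> upset X {a}" "spec_le X b z" "z \<in> topspace X"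
        unfolding upset_def by auto
      then have "spec_le X a b" unfolding upset_def by auto
      then have "spec_le X a z" using b spec_trans by metis
      then show "z \<in> upset X {a}" using b unfolding upset_def by auto
    qed
    show "upset X {a} \<subseteq> upset X (upset X {a})"
      by (rule self_upset) (auto simp: upset_def)
  qed
  then show ?thesis unfolding QX_def using ne comp by blast
qed

lemma smyth_topspace: "topspace (smyth_space X) = QX X"
proof -
  have "topspace (smyth_space X) = \<Union>{box X U | U. openin X U}"
    unfolding smyth_space_def by simp
  also have "\<dots> = QX X"
  proof
    show "\<Union>{box X U | U. openin X U} \<subseteq> QX X" unfolding box_def by auto
    show "QX X \<subseteq> \<Union>{box X U | U. openin X U}"
    proof
      fix Q assume Q: "Q \<in> QX X"
      then have "Q \<subseteq> topspace X" unfolding QX_def using compactin_subset_topspace by auto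
      then have "Q \<in> box X (topspace X)" using Q unfolding box_def by auto
      then show "Q \<in> \<Union>{box X U | U. openin X U}" by blast
    qed
  qed
  finally show ?thesis .
qed

lemma box_open: "openin X U \<Longrightarrow> openin (smyth_space X) (box X U)"
  unfolding smyth_space_def openin_topology_generated_by_iff
  by (rule generate_topology_on.Basis) auto

lemma preimage_open:
  assumes "openin (smyth_space X) Ob"
  shows "openin X {a \<in> topspace X. upset X {a} \<in> Ob}"
proof -
  have "generate_topology_on {box X U | U. openin X U} Ob"
    using assms unfolding smyth_space_def openin_topology_generated_by_iff .
  then show ?thesis
  proof induction
    case Empty then show ?case by simp
  next
    case (Int a b)
    have "{x \<in> topspace X. upset X {x} \<in> a \<inter> b} =
      {x \<in> topspace X. upset X {x} \<in> a} \<inter> {x \<in> topspace X. upset X {x} \<in> b}" by auto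
    moreover have "openin X ({x \<in> topspace X. upset X {x} \<in> a} \<inter> {x \<in> topspace X. upset X {x} \<in> b})"
      using Int.IH by (intro openin_Int) 
    ultimately show ?case by metis
  next
    case (UN K)
    have "{x \<in> topspace X. upset X {x} \<in> \<Union>K} =
       (\<Union>k\<in>K. {x \<in> topspace X. upset X {x} \<in> k})" by auto
    moreover have "openin X (\<Union>k\<in>K. {x \<in> topspace X. upset X {x} \<in> k})"
      using UN.IH by (intro openin_Union) blast
    ultimately show ?case by metis
  next
    case (Basis s)
    then obtain U where U: "openin X U" "s = box X U" by auto
    have "{x \<in> topspace X. upset X {x} \<in> s} = U"
    proof
      show "{x \<in> topspace X. upset X {x} \<in> s} \<subseteq> U"
      proof
        fix x assume x: "x \<in> {x \<in> topspace X. upset X {x} \<in> s}"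
        then have "upset X {x} \<subseteq> U" using U unfolding box_def by auto
        moreover have "x \<in> upset X {x}" using self_upset[of "{x}" X] x by auto
        ultimately show "x \<in> U" by auto
      qed
      show "U \<subseteq> {x \<in> topspace X. upset X {x} \<in> s}"
      proof
        fix x assume x: "x \<in> U"
        then have xt: "x \<in> topspace X" using U openin_subset by auto
        have "upset X {x} \<subseteq> U" using upset_open[of X U "{x}"] U x by auto
        then have "upset X {x} \<in> s" using U upset_single_QX[OF xt] unfolding box_def by auto
        then show "x \<in> {x \<in> topspace X. upset X {x} \<in> s}" using xt by auto
      qed
    qed
    then show ?case using U by simp
  qed
qed

lemma dir1:
  assumes SI: "SI2_open X U"
  shows "GSI2_open X U"
proof -
  have Uo: "openin X U" using SI unfolding SI2_open_def by auto
  have "U \<subseteq> topspace X" using Uo openin_subset by auto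
  moreover have "eventually (\<lambda>y. y \<in> U) N"
    if x: "x \<in> U" and conv: "GSI2_converges X N x" for N x
  proof -
    obtain \<F> where Fs: "\<F> \<subseteq> fin_subsets X"
      and irr: "irreducible_in (smyth_space X) ((\<lambda>F. upset X F) ` \<F>)"
      and ev: "\<forall>V. openin X V \<longrightarrow> (\<exists>F\<in>\<F>. upset X F \<subseteq> V) \<longrightarrow> eventually (\<lambda>y. y \<in> V) N"
      and cap: "(\<Inter>F\<in>\<F>. upset X F) \<subseteq> upset X {x}"
      using conv unfolding GSI2_converges_def by blast
    have Fne: "\<F> \<noteq> {}" using irr unfolding irreducible_in_def by auto
    have Ffin: "finite F" "F \<subseteq> topspace X" "F \<noteq> {}" if "F \<in> \<F>" for F
      using Fs that unfolding fin_subsets_def by auto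
    have "\<exists>F\<in>\<F>. upset X F \<subseteq> U"
    proof (rule ccontr)
      assume nF: "\<not> (\<exists>F\<in>\<F>. upset X F \<subseteq> U)"
      define D where "D = {W. openin X W \<and> U \<subseteq> W \<and> (\<forall>F\<in>\<F>. \<not> F \<subseteq> W)}"
      have UD: "U \<in> D" using nF upset_open[OF Uo] unfolding D_def using Uo by blast
      have "\<exists>M\<in>D. \<forall>Y\<in>D. M \<subseteq> Y \<longrightarrow> Y = M"
      proof (rule subset_Zorn_nonempty)
        show "D \<noteq> {}" using UD by auto
        fix C assume Cne: "C \<noteq> {}" and ch: "subset.chain D C"
        have CD: "C \<subseteq> D" using ch unfolding subset.chain_def by auto
        have "openin X (\<Union>C)" using CD unfolding D_def by auto
        moreover have "U \<subseteq> \<Union>C" using CD Cne unfolding D_def by auto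
        moreover have "\<not> F \<subseteq> \<Union>C" if FF: "F \<in> \<F>" for F
        proof
          assume "F \<subseteq> \<Union>C"
          then obtain B where "B \<in> C" "F \<subseteq> B"
            using finite_subset_Union_chain[OF Ffin(1)[OF FF] _ Cne ch] by blast
          then show False using CD FF unfolding D_def by auto
        qed
        ultimately show "\<Union>C \<in> D" unfolding D_def by auto
      qed
      then obtain W where WD: "W \<in> D" and Wmax: "\<And>Y. Y \<in> D \<Longrightarrow> W \<subseteq> Y \<Longrightarrow> Y = W"
        by blast
      have Wo: "openin X W" and UW: "U \<subseteq> W" and WF: "\<And>F. F \<in> \<F> \<Longrightarrow> \<not> F \<subseteq> W"
        using WD unfolding D_def by auto
      define A where "A = topspace X - W"
      have meet: "\<exists>f\<in>F. f \<in> A" if "F \<in> \<F>" for F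
        using WF[OF that] Ffin(2)[OF that] unfolding A_def by auto
      have ext: "\<exists>F\<in>\<F>. F \<subseteq> W \<union> (topspace X - C1)"
        if C1: "closedin X C1" "\<not> A \<subseteq> C1" for C1
      proof -
        have "openin X (W \<union> (topspace X - C1))" using Wo C1 by auto
        moreover have "W \<union> (topspace X - C1) \<noteq> W" using C1 unfolding A_def by auto
        ultimately have "W \<union> (topspace X - C1) \<notin> D" using Wmax UW unfolding D_def by blast
        then show ?thesis using UW \<open>openin X (W \<union> (topspace X - C1))\<close> unfolding D_def by auto
      qed
      have Airr: "irreducible_in X A"
        unfolding irreducible_in_def
      proof (intro conjI allI impI)
        show "A \<noteq> {}" using meet Fne by blast
        show "A \<subseteq> topspace X" unfolding A_def by auto
        fix C1 C2 assume c1: "closedin X C1" and c2: "closedin X C2" and cov: "A \<subseteq> C1 \<union> C2"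
        show "A \<subseteq> C1 \<or> A \<subseteq> C2"
        proof (rule ccontr)
          assume "\<not> (A \<subseteq> C1 \<or> A \<subseteq> C2)"
          then obtain F1 F2 where F1: "F1 \<in> \<F>" "F1 \<subseteq> W \<union> (topspace X - C1)"
            and F2: "F2 \<in> \<F>" "F2 \<subseteq> W \<union> (topspace X - C2)"
            using ext c1 c2 by meson
          define W1 where "W1 = W \<union> (topspace X - C1)"
          define W2 where "W2 = W \<union> (topspace X - C2)"
          have W1o: "openin X W1" and W2o: "openin X W2" using Wo c1 c2 unfolding W1_def W2_def by auto
          let ?T = "topspace (smyth_space X)"
          let ?A = "(\<lambda>F. upset X F) ` \<F>"
          have AT: "?A \<subseteq> ?T" using irr unfolding irreducible_in_def by auto
          have cl1: "closedin (smyth_space X) (?T - box X W1)" using box_open[OF W1o] by auto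
          have cl2: "closedin (smyth_space X) (?T - box X W2)" using box_open[OF W2o] by auto
          have in1: "upset X F1 \<in> box X W1"
            using AT F1 upset_open[OF W1o] unfolding W1_def box_def smyth_topspace by auto
          have in2: "upset X F2 \<in> box X W2"
            using AT F2 upset_open[OF W2o] unfolding W2_def box_def smyth_topspace by auto
          have "\<not> ?A \<subseteq> (?T - box X W1)" using in1 F1 by auto
          moreover have "\<not> ?A \<subseteq> (?T - box X W2)" using in2 F2 by auto
          ultimately have "\<not> ?A \<subseteq> (?T - box X W1) \<union> (?T - box X W2)"
            using irr cl1 cl2 unfolding irreducible_in_def by blast
          then obtain F where F: "F \<in> \<F>" "upset X F \<in> box X W1" "upset X F \<in> box X W2"
            using AT by blast
          have "F \<subseteq> upset X F" using self_upset Ffin(2)[OF F(1)] by auto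
          also have "\<dots> \<subseteq> W1 \<inter> W2" using F unfolding box_def by auto
          also have "\<dots> \<subseteq> W" using cov unfolding W1_def W2_def A_def by auto
          finally show False using WF F(1) by auto
        qed
      qed
      have xd: "x \<in> delta_cut X A"
        unfolding delta_cut_def lower_bounds_def
      proof (intro CollectI conjI ballI)
        show "x \<in> topspace X" using x \<open>U \<subseteq> topspace X\<close> by auto
        fix u assume u: "u \<in> upper_bounds X A"
        have "u \<in> upset X F" if FF: "F \<in> \<F>" for F
        proof -
          obtain f where "f \<in> F" "f \<in> A" using meet FF by auto
          then show ?thesis using u unfolding upper_bounds_def upset_def by auto
        qed
        then have "u \<in> upset X {x}" using cap Fne by auto
        then show "spec_le X x u" unfolding upset_def by auto
      qed
      have "A \<inter> U \<noteq> {}" using SI Airr xd x unfolding SI2_open_def Irr_def by auto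
      then show False using UW unfolding A_def by auto
    qed
    then show ?thesis using ev Uo by blast
  qed
  ultimately show ?thesis unfolding GSI2_open_def by blast
qed

lemma dir2:
  assumes G: "GSI2_open X U"
  shows "SI2_open X U"
proof -
  have Ut: "U \<subseteq> topspace X" using G unfolding GSI2_open_def by auto
  have Gc: "\<And>N x. N \<noteq> bot \<Longrightarrow> eventually (\<lambda>y. y \<in> topspace X) N \<Longrightarrow> x \<in> U \<Longrightarrow>
      GSI2_converges X N x \<Longrightarrow> eventually (\<lambda>y. y \<in> U) N"
    using G unfolding GSI2_open_def by blast
  have Uo: "openin X U"
  proof (subst openin_subopen, intro ballI)
    fix x assume x: "x \<in> U"
    then have xt: "x \<in> topspace X" using Ut by auto
    let ?N = "nhdsin X x"
    have nb: "?N \<noteq> bot"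
    proof
      assume "?N = bot"
      then have "eventually (\<lambda>y. False) ?N" by simp
      then show False using xt unfolding eventually_nhdsin by auto
    qed
    have et: "eventually (\<lambda>y. y \<in> topspace X) ?N"
      unfolding eventually_nhdsin using xt by auto
    have conv: "GSI2_converges X ?N x"
      unfolding GSI2_converges_def
    proof (intro exI[of _ "{{x}}"] conjI allI impI)
      show "{{x}} \<subseteq> fin_subsets X" using xt unfolding fin_subsets_def by auto
      show "irreducible_in (smyth_space X) ((\<lambda>F. upset X F) ` {{x}})"
        unfolding irreducible_in_def smyth_topspace using upset_single_QX[OF xt] by auto
      fix V assume "openin X V" "\<exists>F\<in>{{x}}. upset X F \<subseteq> V"
      then show "eventually (\<lambda>y. y \<in> V) ?N"
        unfolding eventually_nhdsin using self_upset[of "{x}" X] xt by auto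
    qed auto
    have "eventually (\<lambda>y. y \<in> U) ?N" using Gc[OF nb et x conv] .
    then show "\<exists>T. openin X T \<and> x \<in> T \<and> T \<subseteq> U"
      unfolding eventually_nhdsin using xt by auto
  qed
  moreover have "F \<inter> U \<noteq> {}" if FI: "F \<in> Irr X" and dl: "delta_cut X F \<inter> U \<noteq> {}" for F
  proof -
    have Fi: "irreducible_in X F" using FI unfolding Irr_def by auto
    then have Fne: "F \<noteq> {}" and Ft: "F \<subseteq> topspace X" unfolding irreducible_in_def by auto
    obtain y where y: "y \<in> delta_cut X F" "y \<in> U" using dl by auto
    define \<V> where "\<V> = {V. openin X V \<and> V \<inter> F \<noteq> {}}"
    define N where "N = (INF V\<in>\<V>. principal (V \<inter> F))"
    have "topspace X \<in> \<V>" using Fne Ft unfolding \<V>_def by auto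
    then have Vne: "\<V> \<noteq> {}" by auto
    have Vint: "V1 \<inter> V2 \<in> \<V>" if "V1 \<in> \<V>" "V2 \<in> \<V>" for V1 V2
    proof -
      have o: "openin X V1" "openin X V2" using that unfolding \<V>_def by auto
      have "V1 \<inter> V2 \<inter> F \<noteq> {}"
      proof
        assume e: "V1 \<inter> V2 \<inter> F = {}"
        have "F \<subseteq> (topspace X - V1) \<union> (topspace X - V2)" using e Ft by auto
        then have "F \<subseteq> topspace X - V1 \<or> F \<subseteq> topspace X - V2"
          using Fi o unfolding irreducible_in_def by (meson closedin_diff closedin_topspace)
        then show False using that unfolding \<V>_def by auto
      qed
      then show ?thesis using o unfolding \<V>_def by auto
    qed
    have evN: "eventually P N \<longleftrightarrow> (\<exists>V\<in>\<V>. \<forall>z\<in>V \<inter> F. P z)" for P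
      unfolding N_def
      by (subst eventually_INF_base) (use Vne Vint in \<open>auto simp: eventually_principal intro!: bexI[of _ "_ \<inter> _"]\<close>)
    have nb: "N \<noteq> bot"
    proof
      assume "N = bot"
      then have "eventually (\<lambda>z. False) N" by simp
      then show False unfolding evN \<V>_def by auto
    qed
    have et: "eventually (\<lambda>z. z \<in> topspace X) N" unfolding evN using Vne Ft by auto
    have conv: "GSI2_converges X N y"
      unfolding GSI2_converges_def
    proof (intro exI[of _ "(\<lambda>a. {a}) ` F"] conjI allI impI)
      show "(\<lambda>a. {a}) ` F \<subseteq> fin_subsets X" using Ft unfolding fin_subsets_def by auto
      have im: "(\<lambda>G. upset X G) ` (\<lambda>a. {a}) ` F = (\<lambda>a. upset X {a}) ` F" by auto
      show "irreducible_in (smyth_space X) ((\<lambda>G. upset X G) ` (\<lambda>a. {a}) ` F)"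
        unfolding im irreducible_in_def
      proof (intro conjI allI impI)
        show "(\<lambda>a. upset X {a}) ` F \<noteq> {}" using Fne by auto
        show "(\<lambda>a. upset X {a}) ` F \<subseteq> topspace (smyth_space X)"
          unfolding smyth_topspace using upset_single_QX[of _ X] Ft by blast
        fix C1 C2 assume c1: "closedin (smyth_space X) C1" and c2: "closedin (smyth_space X) C2"
          and cov: "(\<lambda>a. upset X {a}) ` F \<subseteq> C1 \<union> C2"
        let ?T = "topspace (smyth_space X)"
        have p1: "closedin X (topspace X - {a \<in> topspace X. upset X {a} \<in> ?T - C1})"
          using preimage_open[of X "?T - C1"] c1 by auto
        have p2: "closedin X (topspace X - {a \<in> topspace X. upset X {a} \<in> ?T - C2})"
          using preimage_open[of X "?T - C2"] c2 by auto
        have "F \<subseteq> (topspace X - {a \<in> topspace X. upset X {a} \<in> ?T - C1}) \<union>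
                 (topspace X - {a \<in> topspace X. upset X {a} \<in> ?T - C2})"
          using cov Ft by auto
        then have "F \<subseteq> (topspace X - {a \<in> topspace X. upset X {a} \<in> ?T - C1}) \<or>
                 F \<subseteq> (topspace X - {a \<in> topspace X. upset X {a} \<in> ?T - C2})"
          using Fi p1 p2 unfolding irreducible_in_def by blast
        then show "(\<lambda>a. upset X {a}) ` F \<subseteq> C1 \<or> (\<lambda>a. upset X {a}) ` F \<subseteq> C2"
          using Ft upset_single_QX[of _ X] unfolding smyth_topspace by blast
      qed
        fix V assume Vo: "openin X V" and "\<exists>G\<in>(\<lambda>a. {a}) ` F. upset X G \<subseteq> V"
        then obtain a where a: "a \<in> F" "upset X {a} \<subseteq> V" by auto
        then have "a \<in> V" using self_upset[of "{a}" X] Ft by auto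
        then have "V \<in> \<V>" using Vo a unfolding \<V>_def by auto
        then show "eventually (\<lambda>z. z \<in> V) N" unfolding evN by auto
      next
        show "(\<Inter>G\<in>(\<lambda>a. {a}) ` F. upset X G) \<subseteq> upset X {y}"
        proof
          fix z assume z: "z \<in> (\<Inter>G\<in>(\<lambda>a. {a}) ` F. upset X G)"
          then have zt: "z \<in> topspace X" using Fne unfolding upset_def by auto
          have "z \<in> upper_bounds X F" using z zt unfolding upper_bounds_def upset_def by auto
          then have "spec_le X y z" using y unfolding delta_cut_def lower_bounds_def by auto
          then show "z \<in> upset X {y}" using zt unfolding upset_def by auto
        qed
    qed
    have "eventually (\<lambda>z. z \<in> U) N" using Gc[OF nb et y(2) conv] .
    then show ?thesis unfolding evN \<V>_def by auto
  qed
  ultimately show ?thesis unfolding SI2_open_def by auto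
qed

theorem theorem3p7:
  fixes X :: "'a topology"
  assumes "t0_space X"
  shows "{U. GSI2_open X U} = {U. SI2_open X U}"
  using dir1 dir2 by blast

end
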